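(* Let $p\in(1,5)$ and $\lambda>0$. Then $\mathrm{i}\lambda$ is an eigenvalue of $\mathcal{L}=\partial_xL_+$ if and only if $\mathrm{i}\lambda$ is an eigenvalue of $L_+\partial_x$, where $L_+=-\partial_x^2+1-p\,\phi^{p-1}$.
   Context: $\phi(x)=\left(\frac{p+1}{2}\right)^{\frac1{p-1}}\mathrm{sech}^{\frac2{p-1}}\left(\frac{p-1}2x\right)$. Both operators are third-order differential operators acting in $L^2(\mathbb{R})$ with domain $H^3(\mathbb{R})$; an eigenvalue means there is a nonzero eigenfunction in $H^3(\mathbb{R})$. *)

theory Defs
  imports "HOL-Analysis.Analysis"
begin

definition phi :: "real \<Rightarrow> real \<Rightarrow> real" where
  "phi p x = ((p + 1) / 2) powr (1 / (p - 1)) * (1 / cosh ((p - 1) / 2 * x)) powr (2 / (p - 1))"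

definition V :: "real \<Rightarrow> real \<Rightarrow> real" where
  "V p x = phi p x powr (p - 1)"

definition V' :: "real \<Rightarrow> real \<Rightarrow> real" where
  "V' p x = deriv (V p) x"

definition square_integrable :: "(real \<Rightarrow> complex) \<Rightarrow> bool" where
  "square_integrable f \<longleftrightarrow> f \<in> borel_measurable lborel \<and> integrable lborel (\<lambda>x. (cmod (f x))\<^sup>2)"

text \<open>u is (the continuous representative of) an element of H^3(R), with derivatives
  u1 = u', u2 = u'' (classical) and u3 = u''' (weak: u2 is the indefinite integral of u3),
  all of them in L^2(R).\<close>
definition H3_with_derivs ::
  "(real \<Rightarrow> complex) \<Rightarrow> (real \<Rightarrow> complex) \<Rightarrow> (real \<Rightarrow> complex) \<Rightarrow> (real \<Rightarrow> complex) \<Rightarrow> bool" where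
  "H3_with_derivs u u1 u2 u3 \<longleftrightarrow>
     (\<forall>x. (u has_vector_derivative u1 x) (at x)) \<and>
     (\<forall>x. (u1 has_vector_derivative u2 x) (at x)) \<and>
     (\<forall>a b. a \<le> b \<longrightarrow> (u3 has_integral (u2 b - u2 a)) {a..b}) \<and>
     square_integrable u \<and> square_integrable u1 \<and> square_integrable u2 \<and> square_integrable u3"

text \<open>mu is an eigenvalue of  dx L_+  (domain H^3), where L_+ = -dx^2 + 1 - p phi^(p-1):
  dx L_+ u = -u''' + u' - p (phi^(p-1))' u - p phi^(p-1) u', equality in L^2 (i.e. a.e.).\<close>
definition eigenvalue_dx_Lplus :: "real \<Rightarrow> complex \<Rightarrow> bool" where
  "eigenvalue_dx_Lplus p \<mu> \<longleftrightarrow>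
     (\<exists>u u1 u2 u3. H3_with_derivs u u1 u2 u3 \<and> u \<noteq> (\<lambda>x. 0) \<and>
        (AE x in lborel.
           - u3 x + u1 x - of_real p * (of_real (V' p x) * u x + of_real (V p x) * u1 x) = \<mu> * u x))"

text \<open>mu is an eigenvalue of  L_+ dx  (domain H^3):
  L_+ dx u = -u''' + u' - p phi^(p-1) u', equality in L^2 (i.e. a.e.).\<close>
definition eigenvalue_Lplus_dx :: "real \<Rightarrow> complex \<Rightarrow> bool" where
  "eigenvalue_Lplus_dx p \<mu> \<longleftrightarrow>
     (\<exists>u u1 u2 u3. H3_with_derivs u u1 u2 u3 \<and> u \<noteq> (\<lambda>x. 0) \<and>
        (AE x in lborel.
           - u3 x + u1 x - of_real p * of_real (V p x) * u1 x = \<mu> * u x))"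

end

theory Submission
  imports Defs
begin


definition W :: "real \<Rightarrow> real \<Rightarrow> real" where
 "W p x = - (p+1) * ((p-1)/2) * sinh ((p-1)/2*x) / cosh ((p-1)/2*x)^3"

lemma V_eq: assumes "1 < p" shows "V p x = (p+1)/2 * (1/cosh((p-1)/2*x))^2"
proof -
  have A: "(p+1)/2 > 0" using assms by simp
  have S: "1/cosh((p-1)/2*x) > 0" by simp
  have e1: "(((p + 1) / 2) powr (1 / (p - 1))) powr (p-1) = (p+1)/2"
    using A assms by (simp add: powr_powr)
  have e2: "((1 / cosh ((p - 1) / 2 * x)) powr (2 / (p - 1))) powr (p-1) = (1/cosh((p-1)/2*x))^2"
  proof -
    have "((1 / cosh ((p - 1) / 2 * x)) powr (2 / (p - 1))) powr (p-1) = (1 / cosh ((p - 1) / 2 * x)) powr ((2 / (p - 1)) * (p-1))"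
      by (rule powr_powr)
    also have "(2 / (p - 1)) * (p-1) = 2" using assms by (simp add: divide_simps)
    finally show ?thesis using S by (simp only: powr_numeral)
  qed
  have "V p x = (((p + 1) / 2) powr (1 / (p - 1))) powr (p-1) * ((1 / cosh ((p - 1) / 2 * x)) powr (2 / (p - 1))) powr (p-1)"
    unfolding V_def phi_def using A S by (simp add: powr_mult)
  then show ?thesis by (simp only: e1 e2)
qed

lemma V_deriv: assumes "1 < p" shows "(V p has_real_derivative W p x) (at x)"
proof -
  have e: "V p = (\<lambda>x. (p+1)/2 * (1/cosh((p-1)/2*x))^2)" using V_eq[OF assms] by auto
  have c: "cosh ((p-1)/2*x) \<noteq> 0" by (metis cosh_real_pos less_irrefl)
  show ?thesis unfolding e W_def
    apply (rule derivative_eq_intros refl | simp add: c)+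
    using c by (simp add: field_simps power2_eq_square power3_eq_cube)
qed

lemma V'_eq: "1 < p \<Longrightarrow> V' p x = W p x"
  unfolding V'_def using V_deriv DERIV_imp_deriv by blast

lemma W_cont: "continuous_on UNIV (W p)"
  unfolding W_def by (intro continuous_intros) (metis cosh_real_pos less_irrefl power_eq_0_iff)

lemma V_cont: "1 < p \<Longrightarrow> continuous_on UNIV (V p)"
  using V_deriv by (meson DERIV_isCont continuous_at_imp_continuous_on)


lemma V_bound: assumes "1 < p" shows "\<bar>V p x\<bar> \<le> (p+1)/2"
proof -
  define t where "t = (1/cosh((p-1)/2*x))^2"
  have "1/cosh((p-1)/2*x) \<le> 1" "0 < 1/cosh((p-1)/2*x)" using cosh_real_ge_1[of "(p-1)/2*x"] by auto
  hence t1: "t \<le> 1" unfolding t_def by (simp add: power_le_one)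
  have t0: "0 \<le> t" unfolding t_def by simp
  have "V p x = (p+1)/2 * t" unfolding t_def using V_eq[OF assms] .
  moreover have "0 \<le> (p+1)/2 * t" using t0 assms by simp
  ultimately have "\<bar>V p x\<bar> = (p+1)/2 * t" by simp
  thus ?thesis using t1 assms by (simp add: mult_left_le)
qed

lemma W_bound: assumes "1 < p" shows "\<bar>W p x\<bar> \<le> (p+1)*((p-1)/2)"
proof -
  define c where "c = cosh ((p-1)/2*x)"
  define s where "s = sinh ((p-1)/2*x)"
  have c1: "1 \<le> c" unfolding c_def by (rule cosh_real_ge_1)
  have "\<bar>s\<bar>^2 \<le> c^2" unfolding s_def c_def by (simp add: sinh_square_eq)
  hence sc: "\<bar>s\<bar> \<le> c" by (rule power2_le_imp_le) (use c1 in linarith)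
  have c2: "1 \<le> c^2" using c1 by (simp add: one_le_power)
  have "c * 1 \<le> c * c^2" using c1 c2 by (intro mult_left_mono) auto
  hence "c \<le> c^3" by (simp add: power3_eq_cube power2_eq_square)
  hence q: "\<bar>s\<bar> / c^3 \<le> 1" using sc c1 by simp
  have q0: "0 \<le> \<bar>s\<bar> / c^3" using c1 by simp
  have "\<bar>W p x\<bar> = (p+1)*((p-1)/2) * (\<bar>s\<bar> / c^3)" unfolding W_def s_def[symmetric] c_def[symmetric] using assms c1
    by (simp add: abs_mult abs_divide)
  moreover have "0 \<le> (p+1)*((p-1)/2)" using assms by simp
  ultimately show ?thesis using mult_left_le[OF q, of "(p+1)*((p-1)/2)"] by linarith
qed



lemma ftc_ae:
  fixes F g f :: "real \<Rightarrow> complex"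
  assumes I: "\<And>a b. a \<le> b \<Longrightarrow> (g has_integral (F b - F a)) {a..b}"
    and ae: "AE x in lborel. g x = f x" and fc: "continuous_on UNIV f"
  shows "(F has_vector_derivative f x) (at x)"
proof -
  have "AE x in lebesgue. g x = f x" using AE_completion[OF ae] .
  then obtain N where N: "negligible N" "{x. \<not> g x = f x} \<subseteq> N"
    unfolding eventually_ae_filter_negligible by blast
  have fi: "(f has_integral (F b - F a)) {a..b}" if "a \<le> b" for a b
    by (rule has_integral_spike[OF N(1) _ I[OF that]]) (use N(2) in force)
  define a where "a = x - 1"
  define b where "b = x + 1"
  have xab: "x \<in> {a..b}" unfolding a_def b_def by auto
  have d: "((\<lambda>y. integral {a..y} f) has_vector_derivative f x) (at x within {a..b})"
    by (rule integral_has_vector_derivative) (use fc continuous_on_subset xab in auto)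
  have "at x within {a..b} = at x" by (rule at_within_interior) (auto simp: a_def b_def)
  with d have d2: "((\<lambda>y. F a + integral {a..y} f) has_vector_derivative f x) (at x)"
    by (auto intro!: derivative_eq_intros)
  show ?thesis
  proof (rule has_vector_derivative_transform_within_open[OF d2, of "{a<..<b}"])
    fix y assume y: "y \<in> {a<..<b}"
    hence "integral {a..y} f = F y - F a" using fi[of a y] by (auto intro: integral_unique)
    thus "F a + integral {a..y} f = F y" by simp
  qed (auto simp: a_def b_def)
qed

lemma Vmult_deriv:
  fixes u :: "real \<Rightarrow> complex"
  assumes "1 < p" and "(u has_vector_derivative u1) (at x)"
  shows "((\<lambda>y. of_real (V p y) * u y) has_vector_derivative
          (of_real (V' p x) * u x + of_real (V p x) * u1)) (at x)"
proof -
  have "((\<lambda>y. complex_of_real (V p y)) has_vector_derivative of_real (W p x)) (at x)"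
    by (rule has_vector_derivative_of_real[OF V_deriv[OF assms(1)]])
  from bounded_bilinear.has_vector_derivative[OF bounded_bilinear_mult this assms(2)] show ?thesis
    using V'_eq[OF assms(1)] by (simp add: algebra_simps)
qed

lemma SI_meas: "square_integrable f \<Longrightarrow> f \<in> borel_measurable lborel"
  unfolding square_integrable_def by simp

lemma SI_add:
  assumes "square_integrable f" "square_integrable g"
  shows "square_integrable (\<lambda>x. f x + g x)"
  unfolding square_integrable_def
proof
  show m: "(\<lambda>x. f x + g x) \<in> borel_measurable lborel" using assms by (auto simp: square_integrable_def)
  have i: "integrable lborel (\<lambda>x. 2 * (cmod (f x))\<^sup>2 + 2 * (cmod (g x))\<^sup>2)"
    using assms by (auto simp: square_integrable_def)
  show "integrable lborel (\<lambda>x. (cmod (f x + g x))\<^sup>2)"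
  proof (rule Bochner_Integration.integrable_bound[OF i])
    show "(\<lambda>x. (cmod (f x + g x))\<^sup>2) \<in> borel_measurable lborel" using m by measurable
    show "AE x in lborel. norm ((cmod (f x + g x))\<^sup>2) \<le> norm (2 * (cmod (f x))\<^sup>2 + 2 * (cmod (g x))\<^sup>2)"
    proof (rule AE_I2)
      fix x
      have t: "cmod (f x + g x) \<le> cmod (f x) + cmod (g x)" by (rule norm_triangle_ineq)
      have "(cmod (f x + g x))\<^sup>2 \<le> (cmod (f x) + cmod (g x))\<^sup>2"
        using t by (simp add: power_mono)
      also have "\<dots> \<le> 2 * (cmod (f x))\<^sup>2 + 2 * (cmod (g x))\<^sup>2"
      proof -
        have "0 \<le> (cmod (f x) - cmod (g x))\<^sup>2" by simp
        thus ?thesis unfolding power2_sum power2_diff by linarith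
      qed
      finally show "norm ((cmod (f x + g x))\<^sup>2) \<le> norm (2 * (cmod (f x))\<^sup>2 + 2 * (cmod (g x))\<^sup>2)"
        by simp
    qed
  qed
qed

lemma SI_cmult:
  assumes "square_integrable f"
  shows "square_integrable (\<lambda>x. c * f x)"
  using assms unfolding square_integrable_def
  by (auto simp: norm_mult power_mult_distrib)

lemma SI_neg: "square_integrable f \<Longrightarrow> square_integrable (\<lambda>x. - f x)"
  unfolding square_integrable_def by auto

lemma SI_diff: "square_integrable f \<Longrightarrow> square_integrable g \<Longrightarrow> square_integrable (\<lambda>x. f x - g x)"
  using SI_add[of f "\<lambda>x. - g x"] SI_neg[of g] by simp

lemma SI_rmult:
  assumes "square_integrable f" and hc: "continuous_on UNIV h" and hb: "\<And>x. \<bar>h x\<bar> \<le> B"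
  shows "square_integrable (\<lambda>x. of_real (h x) * f x)"
  unfolding square_integrable_def
proof
  have hm: "h \<in> borel_measurable lborel" using borel_measurable_continuous_onI[OF hc] by simp
  show m: "(\<lambda>x. of_real (h x) * f x) \<in> borel_measurable lborel" using assms hm
    by (auto simp: square_integrable_def)
  have i: "integrable lborel (\<lambda>x. B^2 * (cmod (f x))\<^sup>2)"
    using assms by (auto simp: square_integrable_def)
  show "integrable lborel (\<lambda>x. (cmod (of_real (h x) * f x))\<^sup>2)"
  proof (rule Bochner_Integration.integrable_bound[OF i])
    show "(\<lambda>x. (cmod (of_real (h x) * f x))\<^sup>2) \<in> borel_measurable lborel" using m by measurable
    show "AE x in lborel. norm ((cmod (of_real (h x) * f x))\<^sup>2) \<le> norm (B^2 * (cmod (f x))\<^sup>2)"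
    proof (rule AE_I2)
      fix x
      have "\<bar>h x\<bar> \<le> \<bar>B\<bar>" using hb[of x] by linarith
      hence "\<bar>h x\<bar>^2 \<le> B^2" by (simp add: abs_le_square_iff)
      hence "\<bar>h x\<bar>^2 * (cmod (f x))\<^sup>2 \<le> B^2 * (cmod (f x))\<^sup>2" by (simp add: mult_right_mono)
      thus "norm ((cmod (of_real (h x) * f x))\<^sup>2) \<le> norm (B^2 * (cmod (f x))\<^sup>2)"
        by (simp add: norm_mult power_mult_distrib)
    qed
  qed
qed

lemma const_not_integrable:
  assumes "integrable lborel (\<lambda>x::real. r::real)" shows "r = 0"
proof (rule ccontr)
  assume r: "r \<noteq> 0"
  have "(\<integral>\<^sup>+ x. ennreal (norm r) \<partial>lborel) < \<infinity>" using assms by (simp add: integrable_iff_bounded)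
  moreover have "(\<integral>\<^sup>+ x. ennreal (norm r) \<partial>lborel) = \<infinity>" using r
    by (simp add: nn_integral_const ennreal_mult_top)
  ultimately show False by simp
qed



lemma H3D:
  assumes "H3_with_derivs u u1 u2 u3"
  shows "\<And>x. (u has_vector_derivative u1 x) (at x)" "\<And>x. (u1 has_vector_derivative u2 x) (at x)"
    "\<And>a b. a \<le> b \<Longrightarrow> (u3 has_integral (u2 b - u2 a)) {a..b}"
    "square_integrable u" "square_integrable u1" "square_integrable u2" "square_integrable u3"
  using assms unfolding H3_with_derivs_def by auto

lemma ftc_all:
  fixes F f :: "real \<Rightarrow> complex"
  assumes "\<And>x. (F has_vector_derivative f x) (at x)" "a \<le> b"
  shows "(f has_integral (F b - F a)) {a..b}"
  by (rule fundamental_theorem_of_calculus[OF assms(2)]) (use assms(1) has_vector_derivative_at_within in blast)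

lemma cont_of_deriv:
  fixes F :: "real \<Rightarrow> complex"
  assumes "\<And>x. (F has_vector_derivative f x) (at x)"
  shows "continuous_on UNIV F"
  by (rule continuous_on_vector_derivative) (use assms in auto)

lemma dir1:
  assumes p: "1 < p" and mu: "\<mu> \<noteq> 0" and ev: "eigenvalue_dx_Lplus p \<mu>"
  shows "eigenvalue_Lplus_dx p \<mu>"
proof -
  obtain u u1 u2 u3 where H: "H3_with_derivs u u1 u2 u3" and nz: "u \<noteq> (\<lambda>x. 0)"
    and E: "AE x in lborel. - u3 x + u1 x - of_real p * (of_real (V' p x) * u x + of_real (V p x) * u1 x) = \<mu> * u x"
    using ev unfolding eigenvalue_dx_Lplus_def by blast
  note d1 = H3D(1)[OF H] and d2 = H3D(2)[OF H] and I3 = H3D(3)[OF H]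
    and S0 = H3D(4)[OF H] and S1 = H3D(5)[OF H] and S2 = H3D(6)[OF H] and S3 = H3D(7)[OF H]
  define v where "v = (\<lambda>x. - u2 x + u x - of_real p * (of_real (V p x) * u x))"
  define g where "g = (\<lambda>x. - u3 x + u1 x - of_real p * (of_real (V' p x) * u x + of_real (V p x) * u1 x))"
  have Ig: "(g has_integral (v b - v a)) {a..b}" if ab: "a \<le> b" for a b
  proof -
    have i1: "(u1 has_integral (u b - u a)) {a..b}" by (rule ftc_all[OF d1 ab])
    have i2: "((\<lambda>x. of_real (V' p x) * u x + of_real (V p x) * u1 x) has_integral
        (of_real (V p b) * u b - of_real (V p a) * u a)) {a..b}"
      by (rule ftc_all[OF Vmult_deriv[OF p d1] ab])
    have "(g has_integral (- (u2 b - u2 a) + (u b - u a) - of_real p * (of_real (V p b) * u b - of_real (V p a) * u a))) {a..b}"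
      unfolding g_def by (intro has_integral_diff has_integral_add has_integral_neg has_integral_mult_right i1 i2 I3 ab)
    moreover have "- (u2 b - u2 a) + (u b - u a) - of_real p * (of_real (V p b) * u b - of_real (V p a) * u a) = v b - v a"
      unfolding v_def by (simp add: algebra_simps)
    ultimately show ?thesis by simp
  qed
  have uc: "continuous_on UNIV u" by (rule cont_of_deriv[OF d1])
  have dv: "(v has_vector_derivative \<mu> * u x) (at x)" for x
  proof (rule ftc_ae[OF Ig])
    show "AE x in lborel. g x = \<mu> * u x" using E unfolding g_def .
    show "continuous_on UNIV (\<lambda>x. \<mu> * u x)" using uc by (intro continuous_intros)
  qed
  show ?thesis unfolding eigenvalue_Lplus_dx_def
  proof (intro exI conjI)
    show "H3_with_derivs v (\<lambda>x. \<mu> * u x) (\<lambda>x. \<mu> * u1 x) (\<lambda>x. \<mu> * u2 x)"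
      unfolding H3_with_derivs_def
    proof (intro conjI allI impI)
      show "(v has_vector_derivative \<mu> * u x) (at x)" for x by (rule dv)
      show "((\<lambda>x. \<mu> * u x) has_vector_derivative \<mu> * u1 x) (at x)" for x
        by (rule has_vector_derivative_mult_right[OF d1])
      show "((\<lambda>x. \<mu> * u2 x) has_integral (\<mu> * u1 b - \<mu> * u1 a)) {a..b}" if "a \<le> b" for a b
        using has_integral_mult_right[OF ftc_all[OF d2 that], of \<mu>] by (simp add: algebra_simps)
      show "square_integrable v" unfolding v_def
        by (intro SI_diff SI_add SI_neg SI_cmult SI_rmult[OF _ V_cont[OF p] V_bound[OF p]] S0 S2)
      show "square_integrable (\<lambda>x. \<mu> * u x)" by (rule SI_cmult[OF S0])
      show "square_integrable (\<lambda>x. \<mu> * u1 x)" by (rule SI_cmult[OF S1])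
      show "square_integrable (\<lambda>x. \<mu> * u2 x)" by (rule SI_cmult[OF S2])
    qed
    show "v \<noteq> (\<lambda>x. 0)"
    proof
      assume v0: "v = (\<lambda>x. 0)"
      have "u x = 0" for x
      proof -
        have "((\<lambda>x. 0::complex) has_vector_derivative \<mu> * u x) (at x)" using dv[of x] v0 by simp
        moreover have "((\<lambda>x. 0::complex) has_vector_derivative 0) (at x)" by (rule has_vector_derivative_const)
        ultimately have "\<mu> * u x = 0" by (rule vector_derivative_unique_at)
        thus ?thesis using mu by simp
      qed
      thus False using nz by auto
    qed
    show "AE x in lborel. - (\<mu> * u2 x) + \<mu> * u x - of_real p * of_real (V p x) * (\<mu> * u x) = \<mu> * v x"
      by (rule AE_I2) (simp add: v_def algebra_simps)
  qed
qed

lemma dir2: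
  assumes p: "1 < p" and ev: "eigenvalue_Lplus_dx p \<mu>"
  shows "eigenvalue_dx_Lplus p \<mu>"
proof -
  obtain v v1 v2 v3 where H: "H3_with_derivs v v1 v2 v3" and nz: "v \<noteq> (\<lambda>x. 0)"
    and E: "AE x in lborel. - v3 x + v1 x - of_real p * of_real (V p x) * v1 x = \<mu> * v x"
    using ev unfolding eigenvalue_Lplus_dx_def by blast
  note d1 = H3D(1)[OF H] and d2 = H3D(2)[OF H] and I3 = H3D(3)[OF H]
    and S0 = H3D(4)[OF H] and S1 = H3D(5)[OF H] and S2 = H3D(6)[OF H] and S3 = H3D(7)[OF H]
  define w where "w = (\<lambda>x. v1 x - of_real p * (of_real (V p x) * v1 x) - \<mu> * v x)"
  define z where "z = (\<lambda>x. v2 x - of_real p * (of_real (V' p x) * v1 x + of_real (V p x) * v2 x) - \<mu> * v1 x)"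
  have vc: "continuous_on UNIV v" by (rule cont_of_deriv[OF d1])
  have v1c: "continuous_on UNIV v1" by (rule cont_of_deriv[OF d2])
  have Vc: "continuous_on UNIV (\<lambda>x. complex_of_real (V p x))"
    using V_cont[OF p] by (intro continuous_intros) (auto intro: continuous_on_of_real)
  have wc: "continuous_on UNIV w" unfolding w_def using vc v1c Vc V_cont[OF p] by (intro continuous_intros)
  have dw: "(w has_vector_derivative z x) (at x)" for x
    unfolding w_def z_def
    by (intro has_vector_derivative_diff has_vector_derivative_mult_right Vmult_deriv[OF p d2] d1 d2)
  have dv2: "(v2 has_vector_derivative w x) (at x)" for x
  proof (rule ftc_ae[OF I3])
    show "AE x in lborel. v3 x = w x" using E
    proof (rule AE_mp, intro AE_I2 impI)
      fix x assume "- v3 x + v1 x - of_real p * of_real (V p x) * v1 x = \<mu> * v x"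
      hence "v3 x = v1 x - of_real p * of_real (V p x) * v1 x - \<mu> * v x"
        by (simp add: algebra_simps)
      thus "v3 x = w x" by (simp add: w_def mult.assoc)
    qed
  qed (use wc in auto)
  show ?thesis unfolding eigenvalue_dx_Lplus_def
  proof (intro exI conjI)
    show "H3_with_derivs v1 v2 w z"
      unfolding H3_with_derivs_def
    proof (intro conjI allI impI)
      show "(v1 has_vector_derivative v2 x) (at x)" for x by (rule d2)
      show "(v2 has_vector_derivative w x) (at x)" for x by (rule dv2)
      show "(z has_integral (w b - w a)) {a..b}" if "a \<le> b" for a b by (rule ftc_all[OF dw that])
      show "square_integrable v1" by (rule S1)
      show "square_integrable v2" by (rule S2)
      show "square_integrable w" unfolding w_def
        by (intro SI_diff SI_add SI_neg SI_cmult SI_rmult[OF _ V_cont[OF p] V_bound[OF p]] S0 S1)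
      have V'W: "V' p = W p" by (rule ext, rule V'_eq[OF p])
      show "square_integrable z" unfolding z_def V'W
        by (intro SI_diff SI_add SI_neg SI_cmult SI_rmult[OF _ V_cont[OF p] V_bound[OF p]]
            SI_rmult[OF _ W_cont[of p] W_bound[OF p]] S1 S2)
    qed
    show "v1 \<noteq> (\<lambda>x. 0)"
    proof
      assume v0: "v1 = (\<lambda>x. 0)"
      have "\<And>x. x \<in> UNIV \<Longrightarrow> (v has_vector_derivative 0) (at x within UNIV)"
        using d1 v0 by simp
      then obtain c where c: "\<And>x. x \<in> UNIV \<Longrightarrow> v x = c"
        using has_vector_derivative_zero_constant[of UNIV v] by blast
      have "integrable lborel (\<lambda>x. (cmod (v x))\<^sup>2)" using S0 unfolding square_integrable_def by blast
      hence "integrable lborel (\<lambda>x::real. (cmod c)\<^sup>2)" using c by simp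
      hence "(cmod c)\<^sup>2 = 0" by (rule const_not_integrable)
      hence "c = 0" by simp
      thus False using nz c by auto
    qed
    show "AE x in lborel. - z x + v2 x - of_real p * (of_real (V' p x) * v1 x + of_real (V p x) * v2 x) = \<mu> * v1 x"
      by (rule AE_I2) (simp add: z_def algebra_simps)
  qed
qed

theorem mainTheorem5:
  fixes p lam :: real
  assumes "1 < p" and "p < 5" and "lam > 0"
  shows "eigenvalue_dx_Lplus p (\<i> * of_real lam) \<longleftrightarrow> eigenvalue_Lplus_dx p (\<i> * of_real lam)"
proof
  have "\<i> * complex_of_real lam \<noteq> 0" using assms(3) by simp
  thus "eigenvalue_dx_Lplus p (\<i> * of_real lam) \<Longrightarrow> eigenvalue_Lplus_dx p (\<i> * of_real lam)"
    using dir1[OF assms(1)] by blast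
  show "eigenvalue_Lplus_dx p (\<i> * of_real lam) \<Longrightarrow> eigenvalue_dx_Lplus p (\<i> * of_real lam)"
    using dir2[OF assms(1)] by blast
qed

end
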